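(* Let $\mathbf{G}$ be a group (possibly non-commutative) with identity $1_{\mathbf{G}}$, and let $f:W\to\mathbf{G}$ be a $\mathbf{G}$-valued reciprocity function. For $(p,q)\in W$, choose integers $a_0,\dots,a_n$ ($n\ge 0$) with $$q=Q^{(n)}(a_0,\dots,a_n),\qquad p=P^{(n)}(a_0,\dots,a_n),$$ for $i=1,\dots,n$ put $q_i:=Q^{(n-i)}(a_i,\dots,a_n)$, $p_i:=P^{(n-i)}(a_i,\dots,a_n)$, and define $$\mathcal{D}(p,q):=f(p_1,q_1)^{-1}f(p_2,q_2)^{-1}\cdots f(p_n,q_n)^{-1}\in\mathbf{G}$$ (the empty product, for $n=0$, being $1_{\mathbf{G}}$). Then: (i) $\mathcal{D}(p,q)$ depends only on $(p,q)$ and not on the choice of the sequence $(a_0,\dots,a_n)$; (ii) the function $\mathcal{D}:W\to\mathbf{G}$ thus defined is a generalized $\mathbf{G}$-valued Dedekind symbol with reciprocity function $f$.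
   Context: $W:=\{(p,q)\in\mathbb{Z}\times\mathbb{Z} : \gcd(p,q)=1\}$. A $\mathbf{G}$-valued reciprocity function is a map $f:W\to\mathbf{G}$ such that for all relevant $(p,q)$: $f(p,-q)=f(-p,q)$; $f(p,q)f(-q,p)=1_{\mathbf{G}}$; and $f(p,p+q)f(p+q,q)=f(p,q)$. Given such $f$, a generalized $\mathbf{G}$-valued Dedekind symbol with reciprocity function $f$ is a map $\mathcal{D}:W\to\mathbf{G}$ such that $\mathcal{D}(p,q)=\mathcal{D}(p,q+p)$, $\mathcal{D}(p,-q)=\mathcal{D}(-p,q)$, and $\mathcal{D}(p,q)\mathcal{D}(q,-p)^{-1}=f(p,q)$ for all $(p,q)\in W$. The polynomials $Q^{(n)},P^{(n)}\in\mathbb{Z}[A_0,\dots,A_n]$ in commuting variables are defined inductively by $Q^{(0)}(A_0)=A_0$, $P^{(0)}(A_0)=1$, and $Q^{(n+1)}(A_0,\dots,A_{n+1})=A_0Q^{(n)}(A_1,\dots,A_{n+1})-P^{(n)}(A_1,\dots,A_{n+1})$, $P^{(n+1)}(A_0,\dots,A_{n+1})=Q^{(n)}(A_1,\dots,A_{n+1})$; thus $Q^{(n)}/P^{(n)}$ is the continued fraction $A_0-\cfrac{1}{A_1-\cfrac{1}{\ddots-\cfrac{1}{A_n}}}$. The paper assumes every $(p,q)\in W$ admits such a presentation $(a_0,\dots,a_n)$. *)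

theory Defs
  imports Main
begin

definition W :: "(int \<times> int) set" where
  "W = {(p, q). gcd p q = 1}"

text \<open>Continuant polynomials Q^(n), P^(n) evaluated at a list [a_0,...,a_n] (n = length - 1).
  The recursion is the paper's; the value at the empty list (1,0) is only an auxiliary
  seed making Q [a] = a, P [a] = 1 hold; the statement only uses nonempty lists.\<close>
fun QP :: "int list \<Rightarrow> int \<times> int" where
  "QP [] = (1, 0)"
| "QP (a # as) = (a * fst (QP as) - snd (QP as), fst (QP as))"

definition Qc :: "int list \<Rightarrow> int" where "Qc as = fst (QP as)"
definition Pc :: "int list \<Rightarrow> int" where "Pc as = snd (QP as)"

text \<open>Reciprocity function (group written additively: product = +, inverse = uminus, 1 = 0).\<close>
definition reciprocity_function :: "(int \<Rightarrow> int \<Rightarrow> 'g::group_add) \<Rightarrow> bool" where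
  "reciprocity_function f \<longleftrightarrow>
     (\<forall>(p, q)\<in>W. f p (-q) = f (-p) q \<and> f p q + f (-q) p = 0 \<and>
                  f p (p + q) + f (p + q) q = f p q)"

definition dedekind_symbol :: "(int \<Rightarrow> int \<Rightarrow> 'g::group_add) \<Rightarrow> (int \<Rightarrow> int \<Rightarrow> 'g) \<Rightarrow> bool" where
  "dedekind_symbol f D \<longleftrightarrow>
     (\<forall>(p, q)\<in>W. D p q = D p (q + p) \<and> D p (-q) = D (-p) q \<and> D p q + - D q (-p) = f p q)"

text \<open>For a presentation as = [a_0,...,a_n]: f(p_1,q_1)^{-1} ... f(p_n,q_n)^{-1},
  where (p_i,q_i) = (P,Q)(a_i,...,a_n) = (Pc, Qc) (drop i as).\<close>
definition Dlist :: "(int \<Rightarrow> int \<Rightarrow> 'g::group_add) \<Rightarrow> int list \<Rightarrow> 'g" where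
  "Dlist f as = sum_list (map (\<lambda>i. - f (Pc (drop i as)) (Qc (drop i as))) [1..<length as])"

end

theory Submission
  imports Defs
begin

function Dc :: "(int \<Rightarrow> int \<Rightarrow> 'g::group_add) \<Rightarrow> int \<Rightarrow> int \<Rightarrow> 'g" where
  "Dc f p q = (if p = 0 then - f 1 0 else f p (q mod p) + Dc f (q mod p) (-p))"
  by auto
termination
  by (relation "measure (\<lambda>(f,p,q). nat \<bar>p\<bar>)") (auto simp: abs_mod_less)

declare Dc.simps[simp del]

lemma Dc_0[simp]: "Dc f 0 q = - f 1 0" by (subst Dc.simps) simp
lemma Dc_nz: "p \<noteq> 0 \<Longrightarrow> Dc f p q = f p (q mod p) + Dc f (q mod p) (-p)"
  by (subst Dc.simps) simp

lemma Dc_cong: "q mod p = q' mod p \<Longrightarrow> Dc f p q = Dc f p q'"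
proof (cases "p = 0")
  case False
  assume "q mod p = q' mod p"
  then show ?thesis by (simp only: Dc_nz[OF False])
qed simp

lemma Dc_add: "Dc f p (q + p) = Dc f p q"
  by (rule Dc_cong) (rule mod_add_self2)

lemma Dc_diff: "Dc f p (q - p) = Dc f p q"
proof (rule Dc_cong)
  have "q = (q - p) + p" by simp
  then show "(q - p) mod p = q mod p" by (metis mod_add_self2)
qed

lemma Dc_lin: "Dc f p (a * p - r) = Dc f p (- r)"
proof (rule Dc_cong)
  have "a * p - r = - r + a * p" by simp
  then show "(a * p - r) mod p = (- r) mod p" by (metis mod_mult_self1)
qed

lemma W_iff: "(p, q) \<in> W \<longleftrightarrow> gcd p q = 1" by (simp add: W_def)

lemma recE:
  assumes a: "reciprocity_function f" and g: "gcd p q = 1"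
  shows "f p (-q) = f (-p) q \<and> f p q + f (-q) p = 0 \<and> f p (p + q) + f (p + q) q = f p q"
proof -
  have w: "(p, q) \<in> W" using g by (simp add: W_def)
  have "(\<lambda>(p, q). f p (-q) = f (-p) q \<and> f p q + f (-q) p = 0 \<and>
                  f p (p + q) + f (p + q) q = f p q) (p, q)"
    using bspec[OF a[unfolded reciprocity_function_def] w] .
  then show ?thesis by (simp only: prod.case)
qed

lemma R1: assumes "reciprocity_function f" "gcd p q = 1" shows "f p (-q) = f (-p) q"
  using conjunct1[OF recE[OF assms]] .
lemma R2: assumes "reciprocity_function f" "gcd p q = 1" shows "f p q + f (-q) p = 0"
  using conjunct1[OF conjunct2[OF recE[OF assms]]] .
lemma R3: assumes "reciprocity_function f" "gcd p q = 1" shows "f p (p + q) + f (p + q) q = f p q"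
  using conjunct2[OF conjunct2[OF recE[OF assms]]] .

lemma fneg:
  assumes r: "reciprocity_function f" and g: "gcd p q = 1"
  shows "f (-p) (-q) = f p q"
proof -
  have a: "f p q + f (-q) p = 0" using R2[OF r g] .
  have "gcd (-q) p = 1" using g by (simp add: gcd.commute)
  then have b: "f (-q) p + f (-p) (-q) = 0" using R2[OF r, of "-q" p] by simp
  from a have d: "f p q = - f (-q) p" by (simp only: eq_neg_iff_add_eq_0)
  from b have c: "- f (-q) p = f (-p) (-q)" by (rule minus_unique)
  from c d show ?thesis by simp
qed

lemma Dc_neg:
  assumes r: "reciprocity_function f"
  shows "gcd p q = 1 \<Longrightarrow> Dc f (-p) (-q) = Dc f p q"
proof (induction "nat \<bar>p\<bar>" arbitrary: p q rule: less_induct)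
  case less
  show ?case
  proof (cases "p = 0")
    case True then show ?thesis by simp
  next
    case False
    have lt: "nat \<bar>q mod p\<bar> < nat \<bar>p\<bar>" using False abs_mod_less[of p q] by linarith
    have g2: "gcd p (q mod p) = 1" using less(2) gcd_red_int[of q p] by (simp add: gcd.commute)
    have g: "gcd (q mod p) (-p) = 1" using g2 by (simp add: gcd.commute)
    have "Dc f (-(q mod p)) (- (- p)) = Dc f (q mod p) (-p)"
      using less(1)[OF lt g] by simp
    moreover have "-p \<noteq> 0" using False by simp
    moreover have "f (-p) (-(q mod p)) = f p (q mod p)" using fneg[OF r g2] .
    ultimately show ?thesis by (simp only: Dc_nz[OF False] Dc_nz[OF \<open>-p \<noteq> 0\<close>] mod_minus_minus minus_minus)
  qed
qed

lemma Dc_one: "Dc f 1 a = 0"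
proof -
  have "Dc f 1 a = f 1 (a mod 1) + Dc f (a mod 1) (-1)" by (rule Dc_nz) simp
  then show ?thesis by simp
qed

lemma rot:
  assumes r: "reciprocity_function f" and g: "gcd p q = 1"
    and S: "Dc f p q = f p q + Dc f q (-p)"
  shows "Dc f q (-p) = f q (-p) + Dc f (-p) (-q)"
proof -
  have g': "gcd q (-p) = 1" using g by (simp add: gcd.commute)
  have "f q (-p) + f p q = 0" using R2[OF r g'] by simp
  then have "f q (-p) + (f p q + Dc f q (-p)) = Dc f q (-p)"
    by (simp add: add.assoc[symmetric])
  then show ?thesis using S Dc_neg[OF r g] by simp
qed

lemma main_case:
  assumes r: "reciprocity_function f" and g: "gcd p q = 1"
    and pp: "p > 0" and qp: "\<bar>q\<bar> \<le> p"
    and IH: "\<And>p' q'. nat (\<bar>p'\<bar> + \<bar>q'\<bar>) < nat (\<bar>p\<bar> + \<bar>q\<bar>) \<Longrightarrow> gcd p' q' = 1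
               \<Longrightarrow> Dc f p' q' = f p' q' + Dc f q' (-p')"
  shows "Dc f p q = f p q + Dc f q (-p)"
proof -
  consider "0 \<le> q \<and> q < p" | "q = p" | "q < 0" using qp by linarith
  then show ?thesis
  proof cases
    case 1
    then have "q mod p = q" by simp
    then show ?thesis using Dc_nz[of p f q] pp by simp
  next
    case 2
    then have "p = 1" using g pp by simp
    have "f 1 1 + f 1 0 = f 1 0" using R3[OF r, of 1 0] by simp
    note h = this
    have "f 1 1 = (f 1 1 + f 1 0) + - f 1 0" by (simp only: add.assoc right_minus add_0_right)
    also have "\<dots> = f 1 0 + - f 1 0" by (simp only: h)
    also have "\<dots> = 0" by (rule right_minus)
    finally have "f 1 1 = 0" .
    then show ?thesis using 2 \<open>p = 1\<close> by (simp add: Dc_one)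
  next
    case 3
    have c1: "Dc f p (q + p) = f p (q + p) + Dc f (q + p) (-p)"
    proof -
      have m: "(q + p) mod p = q + p" by (rule mod_pos_pos_trivial) (use 3 qp pp in linarith)+
      have "Dc f p (q + p) = f p ((q + p) mod p) + Dc f ((q + p) mod p) (-p)"
        using pp by (intro Dc_nz) simp
      then show ?thesis by (simp only: m)
    qed
    have lt: "nat (\<bar>p + q\<bar> + \<bar>q\<bar>) < nat (\<bar>p\<bar> + \<bar>q\<bar>)" using 3 qp pp by simp
    have g1: "gcd (p + q) q = 1" using g by simp
    have c2: "Dc f (p + q) q = f (p + q) q + Dc f q (-(p + q))" using IH[OF lt g1] .
    have e1: "Dc f (q + p) (-p) = Dc f (p + q) q"
      using Dc_diff[of f "q + p" q] by (simp add: add.commute)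
    have e2: "Dc f q (-(p + q)) = Dc f q (-p)"
      using Dc_diff[of f q "-p"] by simp
    have "Dc f p q = Dc f p (q + p)" by (simp add: Dc_add)
    also have "\<dots> = f p (q + p) + (f (p + q) q + Dc f q (-p))"
      using c1 c2 e1 e2 by simp
    also have "\<dots> = (f p (p + q) + f (p + q) q) + Dc f q (-p)"
      by (simp add: add.assoc add.commute[of q p])
    also have "\<dots> = f p q + Dc f q (-p)" using R3[OF r g] by simp
    finally show ?thesis .
  qed
qed

definition Sp :: "(int \<Rightarrow> int \<Rightarrow> 'g::group_add) \<Rightarrow> int \<Rightarrow> int \<Rightarrow> bool" where
  "Sp f a b \<longleftrightarrow> Dc f a b = f a b + Dc f b (-a)"

lemma Sp_rot: "reciprocity_function f \<Longrightarrow> gcd a b = 1 \<Longrightarrow> Sp f a b \<Longrightarrow> Sp f b (-a)"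
  unfolding Sp_def by (rule rot)

lemma S_all:
  assumes r: "reciprocity_function f"
  shows "gcd p q = 1 \<Longrightarrow> Dc f p q = f p q + Dc f q (-p)"
proof (induction "nat (\<bar>p\<bar> + \<bar>q\<bar>)" arbitrary: p q rule: less_induct)
  case less
  have IH: "\<And>p' q'. nat (\<bar>p'\<bar> + \<bar>q'\<bar>) < nat (\<bar>p\<bar> + \<bar>q\<bar>) \<Longrightarrow> gcd p' q' = 1
               \<Longrightarrow> Dc f p' q' = f p' q' + Dc f q' (-p')"
    by (rule less(1)) auto
  have g: "gcd p q = 1" by fact
  have ga: "gcd q (-p) = 1" "gcd (-p) (-q) = 1" "gcd (-q) p = 1"
    using g by (simp_all add: gcd.commute)
  have IH2: "\<And>p' q'. nat (\<bar>p'\<bar> + \<bar>q'\<bar>) < nat (\<bar>-p\<bar> + \<bar>-q\<bar>) \<Longrightarrow> gcd p' q' = 1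
               \<Longrightarrow> Dc f p' q' = f p' q' + Dc f q' (-p')"
    by (rule IH) simp_all
  have IH3: "\<And>p' q'. nat (\<bar>p'\<bar> + \<bar>q'\<bar>) < nat (\<bar>q\<bar> + \<bar>-p\<bar>) \<Longrightarrow> gcd p' q' = 1
               \<Longrightarrow> Dc f p' q' = f p' q' + Dc f q' (-p')"
    by (rule IH) (simp_all add: add.commute)
  have IH4: "\<And>p' q'. nat (\<bar>p'\<bar> + \<bar>q'\<bar>) < nat (\<bar>-q\<bar> + \<bar>p\<bar>) \<Longrightarrow> gcd p' q' = 1
               \<Longrightarrow> Dc f p' q' = f p' q' + Dc f q' (-p')"
    by (rule IH) (simp_all add: add.commute)
  note R = Sp_rot[OF r]
  consider "\<bar>q\<bar> \<le> \<bar>p\<bar>" "p > 0" | "\<bar>q\<bar> \<le> \<bar>p\<bar>" "p < 0" | "\<bar>q\<bar> > \<bar>p\<bar>" "q > 0"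
    | "\<bar>q\<bar> > \<bar>p\<bar>" "q < 0" | "p = 0" "q = 0" by linarith
  then show ?case
  proof cases
    case 1
    then have "p > 0" "\<bar>q\<bar> \<le> p" by simp_all
    then show ?thesis using main_case[OF r g _ _ IH] by blast
  next
    case 2
    then have "- p > 0" "\<bar>-q\<bar> \<le> -p" by simp_all
    then have h: "Sp f (-p) (-q)" unfolding Sp_def using main_case[OF r ga(2) _ _ IH2] by blast
    have "Sp f (-q) p" using R[OF ga(2) h] unfolding minus_minus .
    then have "Sp f p q" using R[OF ga(3)] unfolding minus_minus by blast
    then show ?thesis unfolding Sp_def .
  next
    case 3
    then have "q > 0" "\<bar>-p\<bar> \<le> q" by simp_all
    then have h: "Sp f q (-p)" unfolding Sp_def using main_case[OF r ga(1) _ _ IH3] by blast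
    have "Sp f (-p) (-q)" using R[OF ga(1) h] .
    then have "Sp f (-q) p" using R[OF ga(2)] unfolding minus_minus by blast
    then have "Sp f p q" using R[OF ga(3)] unfolding minus_minus by blast
    then show ?thesis unfolding Sp_def .
  next
    case 4
    then have "- q > 0" "\<bar>p\<bar> \<le> -q" by simp_all
    then have h: "Sp f (-q) p" unfolding Sp_def using main_case[OF r ga(3) _ _ IH4] by blast
    have "Sp f p q" using R[OF ga(3) h] unfolding minus_minus .
    then show ?thesis unfolding Sp_def .
  next
    case 5
    then show ?thesis using g by simp
  qed
qed

lemma Qc_Cons: "Qc (a # as) = a * Qc as - Pc as" by (simp add: Qc_def Pc_def)
lemma Pc_Cons: "Pc (a # as) = Qc as" by (simp add: Qc_def Pc_def)

lemma gcd_QP: "gcd (Qc as) (Pc as) = 1"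
proof (induction as)
  case Nil show ?case by (simp add: Qc_def Pc_def)
next
  case (Cons a as)
  have "gcd (a * Qc as - Pc as) (Qc as) = gcd (Qc as) (a * Qc as + (- Pc as))"
    by (simp add: gcd.commute)
  also have "\<dots> = gcd (Qc as) (Pc as)" by (simp only: gcd_add_mult gcd_neg2)
  also have "\<dots> = 1" using Cons by (simp add: gcd.commute)
  finally show ?case by (simp add: Qc_Cons Pc_Cons)
qed

lemma Dlist_Cons:
  assumes "as \<noteq> []"
  shows "Dlist f (a # as) = - f (Pc as) (Qc as) + Dlist f as"
proof -
  have "1 < Suc (length as)" using assms by (cases as) auto
  then have "[1..<Suc (length as)] = 1 # [Suc 1..<Suc (length as)]" by (rule upt_conv_Cons)
  also have "[Suc 1..<Suc (length as)] = map Suc [1..<length as]" by (simp only: map_Suc_upt)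
  finally have eq: "[1..<length (a # as)] = 1 # map Suc [1..<length as]" by simp
  show ?thesis unfolding Dlist_def eq by (simp add: comp_def)
qed

lemma Dlist_eq:
  assumes r: "reciprocity_function f"
  shows "as \<noteq> [] \<Longrightarrow> Dlist f as = Dc f (Pc as) (Qc as)"
proof (induction as)
  case Nil then show ?case by simp
next
  case (Cons a as)
  show ?case
  proof (cases "as = []")
    case True
    then show ?thesis by (simp add: Dlist_def Qc_def Pc_def Dc_one)
  next
    case False
    have g: "gcd (Pc as) (Qc as) = 1" using gcd_QP[of as] by (simp add: gcd.commute)
    have "Dc f (Pc (a # as)) (Qc (a # as)) = Dc f (Qc as) (- Pc as)"
      by (simp add: Qc_Cons Pc_Cons Dc_lin)
    moreover have "Dc f (Pc as) (Qc as) = f (Pc as) (Qc as) + Dc f (Qc as) (- Pc as)"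
      using S_all[OF r g] .
    ultimately show ?thesis using Cons(1)[OF False] False
      by (simp add: Dlist_Cons add.assoc[symmetric])
  qed
qed

theorem theorem1p8:
  fixes f :: "int \<Rightarrow> int \<Rightarrow> 'g::group_add"
  assumes recip: "reciprocity_function f"
    and presentation: "\<forall>(p, q)\<in>W. \<exists>as. as \<noteq> [] \<and> Qc as = q \<and> Pc as = p"
  shows "(\<forall>as bs. as \<noteq> [] \<and> bs \<noteq> [] \<and> Qc as = Qc bs \<and> Pc as = Pc bs
                    \<longrightarrow> Dlist f as = Dlist f bs)
     \<and> dedekind_symbol f (\<lambda>p q. Dlist f (SOME as. as \<noteq> [] \<and> Qc as = q \<and> Pc as = p))"
proof
  show "\<forall>as bs. as \<noteq> [] \<and> bs \<noteq> [] \<and> Qc as = Qc bs \<and> Pc as = Pc bs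
                    \<longrightarrow> Dlist f as = Dlist f bs"
    using Dlist_eq[OF recip] by auto
  have key: "Dlist f (SOME as. as \<noteq> [] \<and> Qc as = q \<and> Pc as = p) = Dc f p q"
    if "gcd p q = 1" for p q
  proof -
    have "\<exists>as. as \<noteq> [] \<and> Qc as = q \<and> Pc as = p" using presentation that W_iff[of p q] by auto
    then have "(SOME as. as \<noteq> [] \<and> Qc as = q \<and> Pc as = p) \<noteq> [] \<and>
      Qc (SOME as. as \<noteq> [] \<and> Qc as = q \<and> Pc as = p) = q \<and>
      Pc (SOME as. as \<noteq> [] \<and> Qc as = q \<and> Pc as = p) = p"
      by (rule someI_ex)
    then show ?thesis using Dlist_eq[OF recip] by metis
  qed
  show "dedekind_symbol f (\<lambda>p q. Dlist f (SOME as. as \<noteq> [] \<and> Qc as = q \<and> Pc as = p))"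
    unfolding dedekind_symbol_def
  proof (clarify)
    fix p q assume "(p, q) \<in> W"
    then have g: "gcd p q = 1" by (simp add: W_iff)
    have "gcd p (q + p) = gcd p (1 * p + q)" by (simp add: add.commute)
    also have "\<dots> = gcd p q" by (rule gcd_add_mult)
    finally have g0: "gcd p (q + p) = 1" using g by simp
    have g1: "gcd p (q + p) = 1" "gcd p (- q) = 1" "gcd (- p) q = 1" "gcd q (- p) = 1"
      using g0 apply simp
      using g by (simp_all add: gcd.commute)
    have a: "Dc f p q = Dc f p (q + p)" by (simp add: Dc_add)
    have b: "Dc f p (- q) = Dc f (- p) q" using Dc_neg[OF recip g1(3)] by simp
    have c: "Dc f p q + - Dc f q (- p) = f p q" using S_all[OF recip g] by (simp add: add.assoc)
    show "Dlist f (SOME as. as \<noteq> [] \<and> Qc as = q \<and> Pc as = p) =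
          Dlist f (SOME as. as \<noteq> [] \<and> Qc as = q + p \<and> Pc as = p) \<and>
          Dlist f (SOME as. as \<noteq> [] \<and> Qc as = - q \<and> Pc as = p) =
          Dlist f (SOME as. as \<noteq> [] \<and> Qc as = q \<and> Pc as = - p) \<and>
          Dlist f (SOME as. as \<noteq> [] \<and> Qc as = q \<and> Pc as = p) +
          - Dlist f (SOME as. as \<noteq> [] \<and> Qc as = - p \<and> Pc as = q) = f p q"
      using key[OF g] key[OF g1(1)] key[OF g1(2)] key[OF g1(3)] key[OF g1(4)] a b c by simp
  qed
qed

end
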